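(* Let $\Pi$ be an $\mathrm{LP}^{\mathrm{MLN}}$ program with ground instances $w_i:\mathit{Head}_i(\mathbf c)\leftarrow \mathit{Body}_i(\mathbf c)$ in $Gr(\Pi)$. Let $SAT(\Pi)$ consist of the rules $\mathtt{sat}(i,w_i,\mathbf c)\leftarrow \mathit{Head}_i(\mathbf c)$ and $\mathtt{sat}(i,w_i,\mathbf c)\leftarrow \mathtt{not}\ \mathit{Body}_i(\mathbf c)$, and $ORIGIN(\Pi)$ consist of the rules $\mathit{Head}_i(\mathbf c)\leftarrow \mathit{Body}_i(\mathbf c),\ \mathtt{not}\ \mathtt{not}\ \mathtt{sat}(i,w_i,\mathbf c)$, for every such ground instance. Then the map \[ \phi(I)=I\cup\{\mathtt{sat}(i,w_i,\mathbf c) : w_i:\mathit{Head}_i(\mathbf c)\leftarrow\mathit{Body}_i(\mathbf c)\in Gr(\Pi),\ I\models \mathit{Body}_i(\mathbf c)\rightarrow \mathit{Head}_i(\mathbf c)\} \] is a one-to-one correspondence between $\mathrm{SM}[\Pi]$ and the set of stable models of $SAT(\Pi)\cup ORIGIN(\Pi)$.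
   Context: An $\mathrm{LP}^{\mathrm{MLN}}$ program is a finite set of weighted rules $w:R$ (indexed by $i$), where $R$ is a rule $\mathit{Head}\leftarrow\mathit{Body}$ ($\mathit{Head}$ a possibly empty disjunction of atoms, $\mathit{Body}$ a conjunction of literals possibly with default negation $\mathtt{not}$) and $w$ is a real number or the symbol $\alpha$ (infinite weight). The Herbrand universe is finite; $Gr(\Pi)$ is obtained by replacing the global variables $\mathbf x$ of each rule by all tuples $\mathbf c$ from the Herbrand universe, each instance keeping the weight. For ground $\Pi$ and interpretation $I$: $\overline{\Pi}$ drops weights, $\Pi_I$ is the set of rules of $\Pi$ satisfied by $I$, and $\mathrm{SM}[\Pi]=\{I: I\text{ is a stable model of }\overline{\Pi_I}\}$. Stable models of programs with nested negation ($\mathtt{not}\ \mathtt{not}$) are understood in the standard reduct-based sense. $\mathtt{sat}(i,w_i,\mathbf c)$ are fresh atoms. *)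

theory Defs
  imports Complex_Main
begin

datatype 'a form = Atom 'a | Top | Bot | Neg "'a form"
  | Conj "'a form" "'a form" | Disj "'a form" "'a form"

fun sat_f :: "'a set \<Rightarrow> 'a form \<Rightarrow> bool" where
  "sat_f I (Atom a) = (a \<in> I)"
| "sat_f I Top = True"
| "sat_f I Bot = False"
| "sat_f I (Neg F) = (\<not> sat_f I F)"
| "sat_f I (Conj F G) = (sat_f I F \<and> sat_f I G)"
| "sat_f I (Disj F G) = (sat_f I F \<or> sat_f I G)"

fun reduct_f :: "'a set \<Rightarrow> 'a form \<Rightarrow> 'a form" where
  "reduct_f X (Atom a) = Atom a"
| "reduct_f X Top = Top"
| "reduct_f X Bot = Bot"
| "reduct_f X (Neg F) = (if sat_f X F then Bot else Top)"
| "reduct_f X (Conj F G) = Conj (reduct_f X F) (reduct_f X G)"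
| "reduct_f X (Disj F G) = Disj (reduct_f X F) (reduct_f X G)"

datatype 'a rule = Rule (head: "'a list") (body: "'a form")

definition sat_rule :: "'a set \<Rightarrow> 'a rule \<Rightarrow> bool" where
  "sat_rule I r = (sat_f I (body r) \<longrightarrow> (\<exists>a\<in>set (head r). a \<in> I))"

definition reduct_rule :: "'a set \<Rightarrow> 'a rule \<Rightarrow> 'a rule" where
  "reduct_rule X r = Rule (head r) (reduct_f X (body r))"

definition stable_model :: "'a rule set \<Rightarrow> 'a set \<Rightarrow> bool" where
  "stable_model P X =
     ((\<forall>r\<in>P. sat_rule X (reduct_rule X r)) \<and>
      (\<forall>Y. Y \<subset> X \<longrightarrow> \<not> (\<forall>r\<in>P. sat_rule Y (reduct_rule X r))))"

datatype 'a lit = PosL 'a | NotL 'a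

fun lit_form :: "'a lit \<Rightarrow> 'a form" where
  "lit_form (PosL a) = Atom a"
| "lit_form (NotL a) = Neg (Atom a)"

definition body_form :: "'a lit list \<Rightarrow> 'a form" where
  "body_form ls = foldr (\<lambda>l F. Conj (lit_form l) F) ls Top"

definition head_form :: "'a list \<Rightarrow> 'a form" where
  "head_form as = foldr (\<lambda>a F. Disj (Atom a) F) as Bot"

text \<open>Weights: a real number or alpha (infinite weight).\<close>
datatype weight = W real | Alpha

text \<open>The ground program Gr(Pi) is given by a finite set Gr of ground instances (i, c)
(rule index i, tuple c of Herbrand-universe constants for the global variables),
with head hds (i,c), body bds (i,c), and weight w i of rule i.\<close>

definition gr_rule :: "('i \<times> 'c \<Rightarrow> 'a list) \<Rightarrow> ('i \<times> 'c \<Rightarrow> 'a lit list) \<Rightarrow> 'i \<times> 'c \<Rightarrow> 'a rule" where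
  "gr_rule hds bds k = Rule (hds k) (body_form (bds k))"

definition SM :: "('i \<times> 'c) set \<Rightarrow> ('i \<times> 'c \<Rightarrow> 'a list) \<Rightarrow> ('i \<times> 'c \<Rightarrow> 'a lit list) \<Rightarrow> 'a set set" where
  "SM Gr hds bds = {I. stable_model {gr_rule hds bds k | k. k \<in> Gr \<and> sat_rule I (gr_rule hds bds k)} I}"

datatype ('a, 'i, 'c) xatom = Orig 'a | SatA 'i weight 'c

fun sat_atom :: "('i \<Rightarrow> weight) \<Rightarrow> 'i \<times> 'c \<Rightarrow> ('a, 'i, 'c) xatom" where
  "sat_atom w (i, c) = SatA i (w i) c"

definition SATP :: "('i \<times> 'c) set \<Rightarrow> ('i \<Rightarrow> weight) \<Rightarrow> ('i \<times> 'c \<Rightarrow> 'a list) \<Rightarrow> ('i \<times> 'c \<Rightarrow> 'a lit list)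
    \<Rightarrow> ('a, 'i, 'c) xatom rule set" where
  "SATP Gr w hds bds =
     {Rule [sat_atom w k] (map_form Orig (head_form (hds k))) | k. k \<in> Gr} \<union>
     {Rule [sat_atom w k] (Neg (map_form Orig (body_form (bds k)))) | k. k \<in> Gr}"

definition ORIGINP :: "('i \<times> 'c) set \<Rightarrow> ('i \<Rightarrow> weight) \<Rightarrow> ('i \<times> 'c \<Rightarrow> 'a list) \<Rightarrow> ('i \<times> 'c \<Rightarrow> 'a lit list)
    \<Rightarrow> ('a, 'i, 'c) xatom rule set" where
  "ORIGINP Gr w hds bds =
     {Rule (map Orig (hds k))
        (Conj (map_form Orig (body_form (bds k))) (Neg (Neg (Atom (sat_atom w k))))) | k. k \<in> Gr}"

definition phi :: "('i \<times> 'c) set \<Rightarrow> ('i \<Rightarrow> weight) \<Rightarrow> ('i \<times> 'c \<Rightarrow> 'a list) \<Rightarrow> ('i \<times> 'c \<Rightarrow> 'a lit list)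
    \<Rightarrow> 'a set \<Rightarrow> ('a, 'i, 'c) xatom set" where
  "phi Gr w hds bds I = Orig ` I \<union> {sat_atom w k | k. k \<in> Gr \<and> sat_rule I (gr_rule hds bds k)}"

end

theory Submission
  imports Defs
begin

lemma sat_map: "sat_f X (map_form Orig F) = sat_f {a. Orig a \<in> X} F"
  by (induction F) auto

lemma red_map: "reduct_f X (map_form Orig F) = map_form Orig (reduct_f {a. Orig a \<in> X} F)"
  by (induction F) (auto simp: sat_map)

lemma sat_red: "sat_f X (reduct_f X F) = sat_f X F"
  by (induction F) auto

lemma head_sat: "sat_f I (head_form as) = (\<exists>a\<in>set as. a \<in> I)"
  by (induction as) (auto simp: head_form_def)

lemma head_red: "reduct_f X (head_form as) = head_form as"
  by (induction as) (auto simp: head_form_def)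

lemma sat_atom_inj[simp]: "(sat_atom w k = sat_atom w k') = (k = k')"
  by (cases k; cases k') auto

lemma sat_atom_neq[simp]: "Orig a \<noteq> sat_atom w k" "sat_atom w k \<noteq> Orig a"
  by (cases k; auto)+

declare sat_atom.simps[simp del]

lemma ball_img: "(\<forall>r\<in>f ` A. P r) = (\<forall>k\<in>A. P (f k))" by blast

lemma modP:
 "(\<forall>r\<in>SATP Gr w hds bds \<union> ORIGINP Gr w hds bds. sat_rule Y (reduct_rule X r)) \<longleftrightarrow>
  (\<forall>k\<in>Gr. ((\<exists>a\<in>set (hds k). Orig a \<in> Y) \<longrightarrow> sat_atom w k \<in> Y) \<and>
          (\<not> sat_f {a. Orig a \<in> X} (body_form (bds k)) \<longrightarrow> sat_atom w k \<in> Y) \<and>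
          (sat_atom w k \<in> X \<and> sat_f {a. Orig a \<in> Y} (reduct_f {a. Orig a \<in> X} (body_form (bds k)))
             \<longrightarrow> (\<exists>a\<in>set (hds k). Orig a \<in> Y)))"
  unfolding SATP_def ORIGINP_def Setcompr_eq_image ball_Un
  by (simp add: sat_rule_def reduct_rule_def sat_map red_map head_red head_sat ball_img)
     (blast)

lemma modO:
 "(\<forall>r\<in>{gr_rule hds bds k | k. k \<in> Gr \<and> sat_rule I (gr_rule hds bds k)}. sat_rule J (reduct_rule I r))
   \<longleftrightarrow> (\<forall>k\<in>Gr. sat_rule I (gr_rule hds bds k) \<longrightarrow> sat_f J (reduct_f I (body_form (bds k)))
            \<longrightarrow> (\<exists>a\<in>set (hds k). a \<in> J))"
proof -
  have e: "{gr_rule hds bds k | k. k \<in> Gr \<and> sat_rule I (gr_rule hds bds k)}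
     = gr_rule hds bds ` {k \<in> Gr. sat_rule I (gr_rule hds bds k)}" by blast
  show ?thesis unfolding e ball_img by (auto simp: gr_rule_def reduct_rule_def sat_rule_def)
qed

lemma sat_gr: "sat_rule I (gr_rule hds bds k) =
   (sat_f I (body_form (bds k)) \<longrightarrow> (\<exists>a\<in>set (hds k). a \<in> I))"
  unfolding gr_rule_def sat_rule_def by simp

lemma orig_phi: "{a. Orig a \<in> phi Gr w hds bds I} = I"
  by (auto simp: phi_def)

lemma mem_phi: "sat_atom w k \<in> phi Gr w hds bds I \<longleftrightarrow> k \<in> Gr \<and> sat_rule I (gr_rule hds bds k)"
proof -
  have a: "sat_atom w k \<notin> Orig ` I" by auto
  have b: "sat_atom w k \<in> {sat_atom w k' | k'. k' \<in> Gr \<and> sat_rule I (gr_rule hds bds k')}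
     \<longleftrightarrow> k \<in> Gr \<and> sat_rule I (gr_rule hds bds k)"
    by (cases k) simp
  show ?thesis unfolding phi_def using a b by blast
qed

lemma partA:
  assumes "I \<in> SM Gr hds bds"
  shows "stable_model (SATP Gr w hds bds \<union> ORIGINP Gr w hds bds) (phi Gr w hds bds I)"
proof -
  define X where "X = phi Gr w hds bds I"
  have oX: "{a. Orig a \<in> X} = I" unfolding X_def by (rule orig_phi)
  have memX: "\<And>k. sat_atom w k \<in> X \<longleftrightarrow> k \<in> Gr \<and> sat_rule I (gr_rule hds bds k)"
    unfolding X_def by (rule mem_phi)
  from assms have stI: "\<And>J. J \<subset> I \<Longrightarrow> \<not> (\<forall>k\<in>Gr. sat_rule I (gr_rule hds bds k) \<longrightarrow> sat_f J (reduct_f I (body_form (bds k)))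
            \<longrightarrow> (\<exists>a\<in>set (hds k). a \<in> J))"
    unfolding SM_def stable_model_def modO by blast
  have model: "\<forall>r\<in>SATP Gr w hds bds \<union> ORIGINP Gr w hds bds. sat_rule X (reduct_rule X r)"
    unfolding modP oX using memX oX by (auto simp: sat_red sat_gr)
  have minimal: "\<not> (\<forall>r\<in>SATP Gr w hds bds \<union> ORIGINP Gr w hds bds. sat_rule Y (reduct_rule X r))"
    if "Y \<subset> X" for Y
  proof
    assume "\<forall>r\<in>SATP Gr w hds bds \<union> ORIGINP Gr w hds bds. sat_rule Y (reduct_rule X r)"
    then have mY: "\<forall>k\<in>Gr. ((\<exists>a\<in>set (hds k). Orig a \<in> Y) \<longrightarrow> sat_atom w k \<in> Y) \<and>
          (\<not> sat_f I (body_form (bds k)) \<longrightarrow> sat_atom w k \<in> Y) \<and>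
          (sat_atom w k \<in> X \<and> sat_f {a. Orig a \<in> Y} (reduct_f I (body_form (bds k)))
             \<longrightarrow> (\<exists>a\<in>set (hds k). Orig a \<in> Y))" unfolding modP oX .
    define J where "J = {a. Orig a \<in> Y}"
    have "J \<subseteq> I" using that oX unfolding J_def by auto
    moreover have "\<forall>k\<in>Gr. sat_rule I (gr_rule hds bds k) \<longrightarrow> sat_f J (reduct_f I (body_form (bds k)))
            \<longrightarrow> (\<exists>a\<in>set (hds k). a \<in> J)"
      using mY memX unfolding J_def by auto
    ultimately have JI: "J = I" using stI by blast
    have "X \<subseteq> Y"
    proof
      fix x assume "x \<in> X"
      then consider a where "x = Orig a" "a \<in> I"
        | k where "x = sat_atom w k" "k \<in> Gr" "sat_rule I (gr_rule hds bds k)"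
        unfolding X_def phi_def by blast
      then show "x \<in> Y"
      proof cases
        case 1 then show ?thesis using JI J_def by auto
      next
        case 2 then show ?thesis using mY JI J_def by (auto simp: sat_gr)
      qed
    qed
    then show False using that by blast
  qed
  show ?thesis unfolding stable_model_def X_def[symmetric] using model minimal by blast
qed

lemma partB:
  assumes "stable_model (SATP Gr w hds bds \<union> ORIGINP Gr w hds bds) X"
  shows "X = phi Gr w hds bds {a. Orig a \<in> X} \<and> {a. Orig a \<in> X} \<in> SM Gr hds bds"
proof -
  define I where "I = {a. Orig a \<in> X}"
  have mX: "\<forall>k\<in>Gr. ((\<exists>a\<in>set (hds k). Orig a \<in> X) \<longrightarrow> sat_atom w k \<in> X) \<and>
          (\<not> sat_f I (body_form (bds k)) \<longrightarrow> sat_atom w k \<in> X) \<and>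
          (sat_atom w k \<in> X \<and> sat_f I (reduct_f I (body_form (bds k)))
             \<longrightarrow> (\<exists>a\<in>set (hds k). Orig a \<in> X))"
    using assms unfolding stable_model_def modP I_def by blast
  have minX: "\<And>Y. Y \<subset> X \<Longrightarrow> \<not> (\<forall>k\<in>Gr. ((\<exists>a\<in>set (hds k). Orig a \<in> Y) \<longrightarrow> sat_atom w k \<in> Y) \<and>
          (\<not> sat_f I (body_form (bds k)) \<longrightarrow> sat_atom w k \<in> Y) \<and>
          (sat_atom w k \<in> X \<and> sat_f {a. Orig a \<in> Y} (reduct_f I (body_form (bds k)))
             \<longrightarrow> (\<exists>a\<in>set (hds k). Orig a \<in> Y)))"
    using assms unfolding stable_model_def modP I_def by blast
  define Y where "Y = Orig ` I \<union> {sat_atom w k | k. k \<in> Gr \<and> sat_rule I (gr_rule hds bds k) \<and> sat_atom w k \<in> X}"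
  have YX: "Y \<subseteq> X" unfolding Y_def I_def by auto
  have oY: "{a. Orig a \<in> Y} = I" unfolding Y_def by auto
  have memY: "\<And>k. sat_atom w k \<in> Y \<longleftrightarrow> k \<in> Gr \<and> sat_rule I (gr_rule hds bds k) \<and> sat_atom w k \<in> X"
    unfolding Y_def by auto
  have "\<forall>k\<in>Gr. ((\<exists>a\<in>set (hds k). Orig a \<in> Y) \<longrightarrow> sat_atom w k \<in> Y) \<and>
          (\<not> sat_f I (body_form (bds k)) \<longrightarrow> sat_atom w k \<in> Y) \<and>
          (sat_atom w k \<in> X \<and> sat_f {a. Orig a \<in> Y} (reduct_f I (body_form (bds k)))
             \<longrightarrow> (\<exists>a\<in>set (hds k). Orig a \<in> Y))"
  proof -
    have oY': "\<And>a. Orig a \<in> Y \<longleftrightarrow> a \<in> I" using oY by blast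
    have oX': "\<And>a. Orig a \<in> X \<longleftrightarrow> a \<in> I" using I_def by blast
    show ?thesis
    proof (intro ballI conjI impI)
      fix k assume k: "k \<in> Gr"
      note mk = mX[rule_format, OF k]
      { assume "\<exists>a\<in>set (hds k). Orig a \<in> Y"
        then have h: "\<exists>a\<in>set (hds k). a \<in> I" using oY' by blast
        then have "sat_rule I (gr_rule hds bds k)" by (simp add: sat_gr)
        moreover have "sat_atom w k \<in> X" using mk h oX' by blast
        ultimately show "sat_atom w k \<in> Y" using memY k by blast }
      { assume h: "\<not> sat_f I (body_form (bds k))"
        then have "sat_rule I (gr_rule hds bds k)" by (simp add: sat_gr)
        moreover have "sat_atom w k \<in> X" using mk h by blast
        ultimately show "sat_atom w k \<in> Y" using memY k by blast }
      { assume h: "sat_atom w k \<in> X \<and> sat_f {a. Orig a \<in> Y} (reduct_f I (body_form (bds k)))"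
        then have "sat_f I (body_form (bds k))" unfolding oY by (simp add: sat_red)
        then have "\<exists>a\<in>set (hds k). Orig a \<in> X" using mk h by (simp add: sat_red)
        then show "\<exists>a\<in>set (hds k). Orig a \<in> Y" using oY' oX' by blast }
    qed
  qed
  then have "X = Y" using minX YX by blast
  have phiX: "X = phi Gr w hds bds I"
  proof
    show "X \<subseteq> phi Gr w hds bds I" using \<open>X = Y\<close> unfolding Y_def phi_def by blast
    show "phi Gr w hds bds I \<subseteq> X"
    proof
      fix x assume "x \<in> phi Gr w hds bds I"
      then consider a where "x = Orig a" "a \<in> I"
        | k where "x = sat_atom w k" "k \<in> Gr" "sat_rule I (gr_rule hds bds k)"
        unfolding phi_def by blast
      then show "x \<in> X"
      proof cases
        case 1 then show ?thesis using I_def by auto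
      next
        case 2 then show ?thesis using mX unfolding I_def by (auto simp: sat_gr)
      qed
    qed
  qed
  have memX: "\<And>k. sat_atom w k \<in> X \<longleftrightarrow> k \<in> Gr \<and> sat_rule I (gr_rule hds bds k)"
    using phiX mem_phi by metis
  have "I \<in> SM Gr hds bds"
    unfolding SM_def stable_model_def mem_Collect_eq modO
  proof (intro conjI allI impI)
    show "\<forall>k\<in>Gr. sat_rule I (gr_rule hds bds k) \<longrightarrow> sat_f I (reduct_f I (body_form (bds k))) \<longrightarrow>
        (\<exists>a\<in>set (hds k). a \<in> I)" unfolding sat_gr sat_red by blast
  next
    fix J assume JI: "J \<subset> I"
    show "\<not> (\<forall>k\<in>Gr. sat_rule I (gr_rule hds bds k) \<longrightarrow> sat_f J (reduct_f I (body_form (bds k))) \<longrightarrow>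
        (\<exists>a\<in>set (hds k). a \<in> J))"
    proof
      assume mJ: "\<forall>k\<in>Gr. sat_rule I (gr_rule hds bds k) \<longrightarrow> sat_f J (reduct_f I (body_form (bds k))) \<longrightarrow>
        (\<exists>a\<in>set (hds k). a \<in> J)"
      define Z where "Z = {x \<in> X. \<forall>a. x = Orig a \<longrightarrow> a \<in> J}"
      have oZ: "{a. Orig a \<in> Z} = J" using JI unfolding Z_def I_def by auto
      have memZ: "\<And>k. sat_atom w k \<in> Z \<longleftrightarrow> sat_atom w k \<in> X" unfolding Z_def by auto
      have "Z \<subset> X"
      proof -
        obtain a where "a \<in> I" "a \<notin> J" using JI by blast
        then have "Orig a \<in> X" "Orig a \<notin> Z" using oZ I_def by auto
        then show ?thesis unfolding Z_def by blast
      qed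
      moreover have "\<forall>k\<in>Gr. ((\<exists>a\<in>set (hds k). Orig a \<in> Z) \<longrightarrow> sat_atom w k \<in> Z) \<and>
          (\<not> sat_f I (body_form (bds k)) \<longrightarrow> sat_atom w k \<in> Z) \<and>
          (sat_atom w k \<in> X \<and> sat_f {a. Orig a \<in> Z} (reduct_f I (body_form (bds k)))
             \<longrightarrow> (\<exists>a\<in>set (hds k). Orig a \<in> Z))"
        unfolding oZ memZ
      proof (intro ballI conjI impI)
        fix k assume k: "k \<in> Gr"
        { assume "\<exists>a\<in>set (hds k). Orig a \<in> Z"
          then have "\<exists>a\<in>set (hds k). Orig a \<in> X" unfolding Z_def by auto
          then show "sat_atom w k \<in> X" using mX k by blast }
        { assume "\<not> sat_f I (body_form (bds k))"
          then show "sat_atom w k \<in> X" using mX k by blast }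
        { assume a: "sat_atom w k \<in> X \<and> sat_f J (reduct_f I (body_form (bds k)))"
          then have "sat_rule I (gr_rule hds bds k)" using memX by blast
          then obtain b where "b \<in> set (hds k)" "b \<in> J" using mJ k a by blast
          moreover have "Orig b \<in> Z" using \<open>b \<in> J\<close> JI oZ by auto
          ultimately show "\<exists>a\<in>set (hds k). Orig a \<in> Z" by blast }
      qed
      ultimately show False using minX by blast
    qed
  qed
  then show ?thesis using phiX unfolding I_def by blast
qed

theorem lemma1:
  fixes Gr :: "('i \<times> 'c) set"
    and w :: "'i \<Rightarrow> weight"
    and hds :: "'i \<times> 'c \<Rightarrow> 'a list"
    and bds :: "'i \<times> 'c \<Rightarrow> 'a lit list"
  assumes "finite Gr"
  shows "bij_betw (phi Gr w hds bds) (SM Gr hds bds)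
           {X. stable_model (SATP Gr w hds bds \<union> ORIGINP Gr w hds bds) X}"
  unfolding bij_betw_def
proof
  show "inj_on (phi Gr w hds bds) (SM Gr hds bds)"
    by (metis inj_onI orig_phi)
  show "phi Gr w hds bds ` SM Gr hds bds = {X. stable_model (SATP Gr w hds bds \<union> ORIGINP Gr w hds bds) X}"
  proof
    show "phi Gr w hds bds ` SM Gr hds bds \<subseteq> {X. stable_model (SATP Gr w hds bds \<union> ORIGINP Gr w hds bds) X}"
      using partA by blast
    show "{X. stable_model (SATP Gr w hds bds \<union> ORIGINP Gr w hds bds) X} \<subseteq> phi Gr w hds bds ` SM Gr hds bds"
    proof
      fix X assume "X \<in> {X. stable_model (SATP Gr w hds bds \<union> ORIGINP Gr w hds bds) X}"
      then have "X = phi Gr w hds bds {a. Orig a \<in> X} \<and> {a. Orig a \<in> X} \<in> SM Gr hds bds"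
        using partB by blast
      then show "X \<in> phi Gr w hds bds ` SM Gr hds bds" by blast
    qed
  qed
qed

end
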